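(* For every $M\in\Lambda^{001}$, $H_r(\mathcal T(M))=\mathcal T(H(M))$.
   Context: $\Lambda^{001}$ is the set of possibly infinite λ-terms (trees of variables, abstractions $\lambda x.M$ and applications $(M)N$) whose infinite branches all enter infinitely often the argument position of an application, up to α-equivalence; $M[N/x]$ is capture-avoiding substitution. Every $M\in\Lambda^{001}$ is either of the form $\lambda x_1\dots\lambda x_m.(\dots((\lambda z.N)P)Q_1\dots)Q_n$ (with head redex $(\lambda z.N)P$) or of the form $\lambda x_1\dots\lambda x_m.(\dots((y)Q_1)\dots)Q_n$ (head normal form, hnf). $H(M)=\lambda x_1\dots\lambda x_m.(\dots((N[P/z])Q_1)\dots)Q_n$ in the first case and $H(M)=M$ in the second. Resource terms: $s::=x\mid\lambda x.s\mid\langle s\rangle\bar t$, with $\bar t$ a finite multiset of resource terms; constructors are extended by linearity to finite sums (finite sets of resource terms). Resource substitution $s\langle\bar t/x\rangle$, for $\bar t=[t_1,\dots,t_n]$, is the sum over $\sigma\in\mathfrak S_n$ of the terms obtained by substituting $t_{\sigma(i)}$ for the $i$-th free occurrence of $x$ in $s$ if $x$ has exactly $n$ free occurrences, and $0$ (empty) otherwise. Every resource term is $s=\lambda x_1\dots\lambda x_m.\langle\dots\langle u\rangle\bar t_1\dots\rangle\bar t_n$ with $u$ a variable or a redex $\langle\lambda z.v\rangle\bar w$; in the latter case $H_r(s)=\lambda x_1\dots\lambda x_m.\langle\dots\langle v\langle\bar w/z\rangle\rangle\bar t_1\dots\rangle\bar t_n$ (a finite sum), otherwise $H_r(s)=s$.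 For a set $\mathcal S$ of resource terms, $H_r(\mathcal S)=\bigcup_{s\in\mathcal S}H_r(s)$. Taylor approximation $\ltimes$ is inductive: $x\ltimes x$; $s\ltimes M\Rightarrow\lambda x.s\ltimes\lambda x.M$; ($s\ltimes M$ and $t_i\ltimes N$ for all $i$) $\Rightarrow\langle s\rangle[t_1,\dots,t_n]\ltimes(M)N$; $\mathcal T(M)=\{s : s\ltimes M\}$. *)

theory Defs
  imports Main "HOL-Library.Multiset"
begin

codatatype lterm = LVar nat | LLam lterm | LApp lterm lterm

primcorec liftn :: "nat \<Rightarrow> nat \<Rightarrow> lterm \<Rightarrow> lterm" where
  "liftn n k M = (case M of
      LVar i \<Rightarrow> LVar (if i < k then i else i + n)
    | LLam N \<Rightarrow> LLam (liftn n (Suc k) N)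
    | LApp P Q \<Rightarrow> LApp (liftn n k P) (liftn n k Q))"

text \<open>Capture-avoiding substitution M[P/k] (de Bruijn): the binder of k disappears.\<close>
primcorec subst :: "lterm \<Rightarrow> nat \<Rightarrow> lterm \<Rightarrow> lterm" where
  "subst M k P = (case M of
      LVar i \<Rightarrow> (if i = k then liftn k 0 P else LVar (if i < k then i else i - 1))
    | LLam N \<Rightarrow> LLam (subst N (Suc k) P)
    | LApp A B \<Rightarrow> LApp (subst A k P) (subst B k P))"

inductive sub :: "lterm \<Rightarrow> lterm \<Rightarrow> bool" where
  sub_refl: "sub M M"
| sub_lam: "sub N M \<Longrightarrow> sub N (LLam M)"
| sub_fun: "sub N M \<Longrightarrow> sub N (LApp M P)"
| sub_arg: "sub N P \<Longrightarrow> sub N (LApp M P)"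

inductive spine_fin :: "lterm \<Rightarrow> bool" where
  "spine_fin (LVar i)"
| "spine_fin M \<Longrightarrow> spine_fin (LLam M)"
| "spine_fin M \<Longrightarrow> spine_fin (LApp M N)"

text \<open>Lambda^001: every infinite branch enters argument positions infinitely often,
  i.e. from no position is there an infinite branch avoiding argument positions.\<close>
definition lam001 :: "lterm \<Rightarrow> bool" where
  "lam001 M \<longleftrightarrow> (\<forall>N. sub N M \<longrightarrow> spine_fin N)"

primcorec H :: "lterm \<Rightarrow> lterm" where
  "H M = (case M of
      LVar i \<Rightarrow> LVar i
    | LLam N \<Rightarrow> LLam (H N)
    | LApp P Q \<Rightarrow> (case P of
          LLam N \<Rightarrow> subst N 0 Q
        | LVar i \<Rightarrow> LApp (LVar i) Q
        | LApp P1 P2 \<Rightarrow> LApp (H (LApp P1 P2)) Q))"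

datatype rterm = RVar nat | RLam rterm | RApp rterm "rterm multiset"

primrec rlift :: "nat \<Rightarrow> nat \<Rightarrow> rterm \<Rightarrow> rterm" where
  "rlift n k (RVar i) = RVar (if i < k then i else i + n)"
| "rlift n k (RLam s) = RLam (rlift n (Suc k) s)"
| "rlift n k (RApp s ts) = RApp (rlift n k s) (image_mset (rlift n k) ts)"

text \<open>Resource substitution s<ts/k>: rsub s k ts r holds iff r is one of the summands
  (finite sums being finite sets), i.e. r is obtained by distributing the elements of
  the multiset ts bijectively over the free occurrences of k in s; no summand if the
  number of occurrences differs from the size of ts.\<close>
inductive rsub :: "rterm \<Rightarrow> nat \<Rightarrow> rterm multiset \<Rightarrow> rterm \<Rightarrow> bool"
  and rsubb :: "rterm multiset \<Rightarrow> nat \<Rightarrow> rterm multiset \<Rightarrow> rterm multiset \<Rightarrow> bool" where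
  rsub_var_eq: "rsub (RVar k) k {#t#} (rlift k 0 t)"
| rsub_var_neq: "i \<noteq> k \<Longrightarrow> rsub (RVar i) k {#} (RVar (if i < k then i else i - 1))"
| rsub_lam: "rsub s (Suc k) ts r \<Longrightarrow> rsub (RLam s) k ts (RLam r)"
| rsub_app: "rsub s k ts1 r \<Longrightarrow> rsubb us k ts2 rs \<Longrightarrow> rsub (RApp s us) k (ts1 + ts2) (RApp r rs)"
| rsubb_empty: "rsubb {#} k {#} {#}"
| rsubb_add: "rsub u k ts1 r \<Longrightarrow> rsubb us k ts2 rs \<Longrightarrow>
     rsubb (add_mset u us) k (ts1 + ts2) (add_mset r rs)"

text \<open>Resource head reduction H_r on a single resource term (a finite sum = finite set).\<close>
primrec Hr1 :: "rterm \<Rightarrow> rterm set" where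
  "Hr1 (RVar i) = {RVar i}"
| "Hr1 (RLam s) = RLam ` Hr1 s"
| "Hr1 (RApp s ts) = (case s of
      RLam v \<Rightarrow> {r. rsub v 0 ts r}
    | RVar i \<Rightarrow> {RApp (RVar i) ts}
    | RApp s1 us \<Rightarrow> (\<lambda>r. RApp r ts) ` Hr1 s)"

definition Hr :: "rterm set \<Rightarrow> rterm set" where
  "Hr S = (\<Union>s\<in>S. Hr1 s)"

inductive taylor :: "rterm \<Rightarrow> lterm \<Rightarrow> bool" where
  "taylor (RVar i) (LVar i)"
| "taylor s M \<Longrightarrow> taylor (RLam s) (LLam M)"
| "taylor s M \<Longrightarrow> (\<forall>t. t \<in># ts \<longrightarrow> taylor t N) \<Longrightarrow> taylor (RApp s ts) (LApp M N)"

definition T :: "lterm \<Rightarrow> rterm set" where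
  "T M = {s. taylor s M}"

end

theory Submission
  imports Defs
begin

lemma liftn_simps[simp]:
  "liftn n k (LVar i) = LVar (if i < k then i else i + n)"
  "liftn n k (LLam N) = LLam (liftn n (Suc k) N)"
  "liftn n k (LApp P Q) = LApp (liftn n k P) (liftn n k Q)"
  by (subst liftn.code; simp)+

lemma subst_simps[simp]:
  "subst (LVar i) k P = (if i = k then liftn k 0 P else LVar (if i < k then i else i - 1))"
  "subst (LLam N) k P = LLam (subst N (Suc k) P)"
  "subst (LApp A B) k P = LApp (subst A k P) (subst B k P)"
  by (subst subst.code; simp)+

lemma H_simps[simp]:
  "H (LVar i) = LVar i"
  "H (LLam N) = LLam (H N)"
  "H (LApp (LLam N) Q) = subst N 0 Q"
  "H (LApp (LVar i) Q) = LApp (LVar i) Q"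
  "H (LApp (LApp P1 P2) Q) = LApp (H (LApp P1 P2)) Q"
  by (subst H.code; simp)+

lemma taylor_simps:
  "taylor r (LVar i) \<longleftrightarrow> r = RVar i"
  "taylor r (LLam M) \<longleftrightarrow> (\<exists>s. r = RLam s \<and> taylor s M)"
  "taylor r (LApp M N) \<longleftrightarrow> (\<exists>s ts. r = RApp s ts \<and> taylor s M \<and> (\<forall>t. t \<in># ts \<longrightarrow> taylor t N))"
  by (auto elim: taylor.cases intro: taylor.intros)

lemma taylor_lift: "taylor s M \<Longrightarrow> taylor (rlift n k s) (liftn n k M)"
proof (induction s M arbitrary: k rule: taylor.induct)
  case (3 s M ts N)
  then show ?case by (auto intro!: taylor.intros(3))
qed (auto intro: taylor.intros)

lemma taylor_inv:
  "taylor (RVar i) N \<longleftrightarrow> N = LVar i"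
  "taylor (RLam s) N \<longleftrightarrow> (\<exists>M. N = LLam M \<and> taylor s M)"
  "taylor (RApp s ts) N \<longleftrightarrow> (\<exists>A B. N = LApp A B \<and> taylor s A \<and> (\<forall>t. t \<in># ts \<longrightarrow> taylor t B))"
  by (auto elim: taylor.cases intro: taylor.intros)

lemma taylor_lift_inv:
  "taylor r (liftn n k M) \<Longrightarrow> \<exists>s. r = rlift n k s \<and> taylor s M"
proof (induction r arbitrary: M k)
  case (RVar i)
  then show ?case by (cases M) (auto simp: taylor_simps intro: taylor.intros)
next
  case (RLam r)
  show ?case
  proof (cases M)
    case (LLam N)
    with RLam.prems have "taylor r (liftn n (Suc k) N)" by (auto simp: taylor_simps)
    from RLam.IH[OF this] obtain s where "r = rlift n (Suc k) s" "taylor s N" by blast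
    then show ?thesis using LLam by (intro exI[of _ "RLam s"]) (auto intro: taylor.intros)
  qed (use RLam.prems in \<open>auto simp: taylor_simps\<close>)
next
  case (RApp r0 rs)
  show ?case
  proof (cases M)
    case (LApp A B)
    with RApp.prems have h0: "taylor r0 (liftn n k A)" and hs: "\<forall>t. t \<in># rs \<longrightarrow> taylor t (liftn n k B)"
      by (auto simp: taylor_simps)
    from RApp.IH(1)[OF h0] obtain s0 where s0: "r0 = rlift n k s0" "taylor s0 A" by blast
    have ex: "\<forall>r'\<in>#rs. \<exists>s'. r' = rlift n k s' \<and> taylor s' B"
      using RApp.IH(2) hs by blast
    define f where "f r' = (SOME s'. r' = rlift n k s' \<and> taylor s' B)" for r'
    have f: "\<forall>r'\<in>#rs. r' = rlift n k (f r') \<and> taylor (f r') B"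
    proof
      fix r' assume "r' \<in># rs"
      then have "\<exists>s'. r' = rlift n k s' \<and> taylor s' B" using ex by blast
      then show "r' = rlift n k (f r') \<and> taylor (f r') B" unfolding f_def by (rule someI_ex)
    qed
    have "image_mset (rlift n k) (image_mset f rs) = rs"
    proof -
      have "image_mset (rlift n k) (image_mset f rs) = image_mset (\<lambda>r'. r') rs"
        unfolding multiset.map_comp by (rule multiset.map_cong0) (use f in auto)
      then show ?thesis by simp
    qed
    then have "RApp r0 rs = rlift n k (RApp s0 (image_mset f rs))" using s0 by simp
    moreover have "taylor (RApp s0 (image_mset f rs)) M"
      unfolding LApp by (rule taylor.intros(3)) (use s0 f in auto)
    ultimately show ?thesis by blast
  qed (use RApp.prems in \<open>auto simp: taylor_simps\<close>)
qed

lemma subst_sound: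
  "rsub s k ts r \<Longrightarrow> (\<And>N. taylor s N \<Longrightarrow> (\<forall>t. t \<in># ts \<longrightarrow> taylor t Q) \<Longrightarrow> taylor r (subst N k Q))"
  "rsubb us k ts rs \<Longrightarrow> (\<And>N. (\<forall>u. u \<in># us \<longrightarrow> taylor u N) \<Longrightarrow> (\<forall>t. t \<in># ts \<longrightarrow> taylor t Q) \<Longrightarrow> (\<forall>r. r \<in># rs \<longrightarrow> taylor r (subst N k Q)))"
proof (induction rule: rsub_rsubb.inducts)
  case (rsub_var_eq k t)
  then show ?case by (auto simp: taylor_inv intro: taylor_lift)
next
  case (rsub_var_neq i k)
  then show ?case by (auto simp: taylor_simps taylor_inv intro: taylor.intros)
next
  case (rsub_lam s k ts r)
  then show ?case by (auto simp: taylor_inv intro: taylor.intros)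
next
  case (rsub_app s k ts1 r us ts2 rs)
  then show ?case by (auto simp: taylor_inv intro!: taylor.intros(3))
next
  case (rsubb_empty k)
  then show ?case by simp
next
  case (rsubb_add u k ts1 r us ts2 rs)
  then show ?case by auto
qed

lemma subst_complete:
  "taylor r (subst N k Q) \<Longrightarrow> \<exists>s ts. taylor s N \<and> (\<forall>t. t \<in># ts \<longrightarrow> taylor t Q) \<and> rsub s k ts r"
proof (induction r arbitrary: N k)
  case (RVar i)
  show ?case
  proof (cases N)
    case (LVar j)
    show ?thesis
    proof (cases "j = k")
      case True
      with RVar.prems LVar obtain t where "RVar i = rlift k 0 t" "taylor t Q"
        using taylor_lift_inv by fastforce
      then show ?thesis using True LVar
        by (intro exI[of _ "RVar k"] exI[of _ "{#t#}"]) (auto intro: taylor.intros rsub_var_eq)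
    next
      case False
      then have "rsub (RVar j) k {#} (RVar i)" using RVar.prems LVar rsub_var_neq[of j k]
        by (auto simp: taylor_simps split: if_splits)
      then show ?thesis using LVar
        by (intro exI[of _ "RVar j"] exI[of _ "{#}"]) (auto intro: taylor.intros)
    qed
  qed (use RVar.prems in \<open>auto simp: taylor_simps\<close>)
next
  case (RLam r)
  show ?case
  proof (cases N)
    case (LVar j)
    show ?thesis
    proof (cases "j = k")
      case True
      with RLam.prems LVar obtain t where "RLam r = rlift k 0 t" "taylor t Q"
        using taylor_lift_inv by fastforce
      then show ?thesis using True LVar
        by (intro exI[of _ "RVar k"] exI[of _ "{#t#}"]) (auto intro: taylor.intros rsub_var_eq)
    next
      case False
      then show ?thesis using RLam.prems LVar by (auto simp: taylor_simps)
    qed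
  next
    case (LLam N')
    with RLam.prems have "taylor r (subst N' (Suc k) Q)" by (auto simp: taylor_simps)
    from RLam.IH[OF this] obtain s ts where "taylor s N'" "\<forall>t. t \<in># ts \<longrightarrow> taylor t Q" "rsub s (Suc k) ts r"
      by blast
    then show ?thesis using LLam by (auto intro: taylor.intros rsub_lam)
  qed (use RLam.prems in \<open>auto simp: taylor_simps\<close>)
next
  case (RApp r0 rs)
  show ?case
  proof (cases N)
    case (LVar j)
    show ?thesis
    proof (cases "j = k")
      case True
      with RApp.prems LVar obtain t where "RApp r0 rs = rlift k 0 t" "taylor t Q"
        using taylor_lift_inv by fastforce
      then show ?thesis using True LVar
        by (intro exI[of _ "RVar k"] exI[of _ "{#t#}"]) (auto intro: taylor.intros rsub_var_eq)
    next
      case False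
      then show ?thesis using RApp.prems LVar by (auto simp: taylor_simps)
    qed
  next
    case (LApp A B)
    with RApp.prems have h0: "taylor r0 (subst A k Q)" and hs: "\<forall>t. t \<in># rs \<longrightarrow> taylor t (subst B k Q)"
      by (auto simp: taylor_simps)
    from RApp.IH(1)[OF h0] obtain s0 ts1 where s0: "taylor s0 A" "\<forall>t. t \<in># ts1 \<longrightarrow> taylor t Q" "rsub s0 k ts1 r0"
      by blast
    have ex: "\<forall>r'\<in>#rs. \<exists>s ts. taylor s B \<and> (\<forall>t. t \<in># ts \<longrightarrow> taylor t Q) \<and> rsub s k ts r'"
      using RApp.IH(2) hs by blast
    have "\<exists>us ts2. (\<forall>u. u \<in># us \<longrightarrow> taylor u B) \<and> (\<forall>t. t \<in># ts2 \<longrightarrow> taylor t Q) \<and> rsubb us k ts2 rs"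
      using ex
    proof (induction rs)
      case empty
      show ?case by (intro exI[of _ "{#}"]) (auto intro: rsubb_empty)
    next
      case (add x rs)
      then obtain us ts2 where a: "(\<forall>u. u \<in># us \<longrightarrow> taylor u B)" "(\<forall>t. t \<in># ts2 \<longrightarrow> taylor t Q)" "rsubb us k ts2 rs"
        by auto
      from add.prems obtain s ts where b: "taylor s B" "(\<forall>t. t \<in># ts \<longrightarrow> taylor t Q)" "rsub s k ts x"
        by auto
      have "rsubb (add_mset s us) k (ts + ts2) (add_mset x rs)" using b(3) a(3) by (rule rsubb_add)
      moreover have "\<forall>u. u \<in># add_mset s us \<longrightarrow> taylor u B" using a b by auto
      moreover have "\<forall>t. t \<in># ts + ts2 \<longrightarrow> taylor t Q" using a b by auto
      ultimately show ?case by blast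
    qed
    then obtain us ts2 where c: "(\<forall>u. u \<in># us \<longrightarrow> taylor u B)" "(\<forall>t. t \<in># ts2 \<longrightarrow> taylor t Q)" "rsubb us k ts2 rs"
      by blast
    have r: "rsub (RApp s0 us) k (ts1 + ts2) (RApp r0 rs)" using s0(3) c(3) by (rule rsub_app)
    have t: "taylor (RApp s0 us) N" unfolding LApp using s0(1) c(1) by (rule taylor.intros(3))
    have q: "\<forall>t. t \<in># ts1 + ts2 \<longrightarrow> taylor t Q" using s0(2) c(2) by auto
    show ?thesis by (rule exI[of _ "RApp s0 us"], rule exI[of _ "ts1 + ts2"]) (use r t q in simp)
  next
    case (LLam N')
    then have "taylor (RApp r0 rs) (LLam (subst N' (Suc k) Q))" using RApp.prems by simp
    then show ?thesis by (simp add: taylor_simps)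
  qed
qed

lemma Hr_sound: "taylor s M \<Longrightarrow> r \<in> Hr1 s \<Longrightarrow> taylor r (H M)"
proof (induction s M arbitrary: r rule: taylor.induct)
  case (1 i)
  then show ?case by (auto intro: taylor.intros)
next
  case (2 s M)
  then show ?case by (auto intro: taylor.intros)
next
  case (3 s M ts N)
  show ?case
  proof (cases M)
    case (LVar i)
    then show ?thesis using 3 by (auto simp: taylor_simps)
  next
    case (LLam N')
    with 3 obtain v where "s = RLam v" "taylor v N'" by (auto simp: taylor_simps)
    then show ?thesis using 3 LLam subst_sound(1) by auto
  next
    case (LApp P1 P2)
    with 3 obtain s1 us where "s = RApp s1 us" by (auto simp: taylor_simps)
    then show ?thesis using 3 LApp by (auto intro: taylor.intros)
  qed
qed

lemma Hr_beta: "taylor r (subst N 0 Q) \<Longrightarrow> \<exists>s. taylor s (LApp (LLam N) Q) \<and> r \<in> Hr1 s"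
proof -
  assume "taylor r (subst N 0 Q)"
  from subst_complete[OF this] obtain s ts where "taylor s N" "\<forall>t. t \<in># ts \<longrightarrow> taylor t Q" "rsub s 0 ts r"
    by blast
  then show ?thesis by (intro exI[of _ "RApp (RLam s) ts"]) (auto intro: taylor.intros)
qed

lemma Hr_complete: "taylor r (H M) \<Longrightarrow> \<exists>s. taylor s M \<and> r \<in> Hr1 s"
proof (induction r arbitrary: M)
  case (RVar i)
  show ?case
  proof (cases M)
    case (LVar j)
    then show ?thesis using RVar.prems by (auto simp: taylor_simps intro: taylor.intros)
  next
    case (LLam N)
    then show ?thesis using RVar.prems by (auto simp: taylor_simps)
  next
    case (LApp P Q)
    show ?thesis
    proof (cases P)
      case (LLam N)
      then show ?thesis using RVar.prems LApp Hr_beta by auto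
    qed (use RVar.prems LApp in \<open>auto simp: taylor_simps\<close>)
  qed
next
  case (RLam r)
  show ?case
  proof (cases M)
    case (LVar j)
    then show ?thesis using RLam.prems by (auto simp: taylor_simps)
  next
    case (LLam N)
    with RLam.prems have "taylor r (H N)" by (auto simp: taylor_simps)
    from RLam.IH[OF this] obtain s where "taylor s N" "r \<in> Hr1 s" by blast
    then show ?thesis using LLam by (auto intro: taylor.intros)
  next
    case (LApp P Q)
    show ?thesis
    proof (cases P)
      case (LLam N)
      then show ?thesis using RLam.prems LApp Hr_beta by auto
    qed (use RLam.prems LApp in \<open>auto simp: taylor_simps\<close>)
  qed
next
  case (RApp r0 rs)
  show ?case
  proof (cases M)
    case (LVar j)
    then show ?thesis using RApp.prems by (auto simp: taylor_simps)
  next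
    case (LLam N)
    then show ?thesis using RApp.prems by (auto simp: taylor_simps)
  next
    case (LApp P Q)
    show ?thesis
    proof (cases P)
      case (LLam N)
      then show ?thesis using RApp.prems LApp Hr_beta by auto
    next
      case (LVar i)
      then have "taylor (RApp r0 rs) (LApp (LVar i) Q)" using RApp.prems LApp by simp
      then have "taylor (RApp r0 rs) M" using LApp \<open>P = LVar i\<close> by simp
      moreover have "RApp r0 rs \<in> Hr1 (RApp r0 rs)" using RApp.prems LApp \<open>P = LVar i\<close>
        by (auto simp: taylor_simps taylor_inv)
      ultimately show ?thesis by blast
    next
      case (LApp P1 P2)
      with \<open>M = LApp P Q\<close> RApp.prems have h0: "taylor r0 (H (LApp P1 P2))" and hs: "\<forall>t. t \<in># rs \<longrightarrow> taylor t Q"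
        by (auto simp: taylor_simps)
      from RApp.IH(1)[OF h0] obtain s0 where s0: "taylor s0 (LApp P1 P2)" "r0 \<in> Hr1 s0" by blast
      then obtain a b where "s0 = RApp a b" by (auto simp: taylor_simps)
      have "taylor (RApp s0 rs) M" unfolding \<open>M = LApp P Q\<close> LApp using s0(1) hs by (rule taylor.intros(3))
      moreover have "RApp r0 rs \<in> Hr1 (RApp s0 rs)" using \<open>s0 = RApp a b\<close> s0(2) by simp
      ultimately show ?thesis by blast
    qed
  qed
qed

theorem mainTheorem9:
  fixes M :: lterm
  assumes "lam001 M"
  shows "Hr (T M) = T (H M)"
proof
  show "Hr (T M) \<subseteq> T (H M)"
    unfolding Hr_def T_def using Hr_sound by blast
  show "T (H M) \<subseteq> Hr (T M)"
  proof
    fix r assume "r \<in> T (H M)"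
    then have "taylor r (H M)" unfolding T_def by simp
    from Hr_complete[OF this] obtain s where "taylor s M" "r \<in> Hr1 s" by blast
    then show "r \<in> Hr (T M)" unfolding Hr_def T_def by blast
  qed
qed

end
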